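(* Let $d>2$, $\beta>0$, $\lambda>0$, $\mu\in\mathbb R$, and let $r_\kappa$ be as defined in the context. Then: (a) $r_\kappa$ converges as $\kappa\to\infty$ to some $r_*\in(0,1)$ if and only if $\beta^d\mu<\zeta(d)\lambda$; in that case $r_*$ is the unique solution of $$\frac{\mu}{\lambda}=\frac{\log r_*}{\beta\lambda}+\frac{1}{\beta^d}\int_{[0,\infty)^d}\frac{r_*\,dp}{e^{|p|_1}-r_*}.$$ (b) $\kappa^d(1-r_\kappa)\to\beta^d\lambda/(\beta^d\mu-\zeta(d)\lambda)$ (and hence $r_\kappa\to1$) if and only if $\beta^d\mu>\zeta(d)\lambda$. (c) $r_\kappa\to1$ and $\kappa^d(1-r_\kappa)\to+\infty$ if and only if $\beta^d\mu=\zeta(d)\lambda$.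
   Context: $h_\kappa=\frac12\sum_{j=1}^d\big(-\partial^2/\partial x_j^2+x_j^2/\kappa^2-1/\kappa\big)$ on $L^2(\mathbb R^d)$ (spectrum $\{|s|_1/\kappa: s\in\mathbb Z_+^d\}$, $|s|_1=\sum_js_j$), $G_\kappa(\beta)=e^{-\beta h_\kappa}$. For $\kappa\ge1$, $(r_\kappa,s_\kappa)$ is the unique solution with $r_\kappa\in(0,1)$ of the system $r=\exp(\beta\mu-\beta\lambda s/\kappa^d)$, $s=\mathrm{Tr}[rG_\kappa(\beta)(1-rG_\kappa(\beta))^{-1}]$; equivalently $\kappa^{-d}\mathrm{Tr}[r_\kappa G_\kappa(\beta)(1-r_\kappa G_\kappa(\beta))^{-1}]=(\beta\mu-\log r_\kappa)/(\beta\lambda)$. $\zeta$ is the Riemann zeta function; $|p|_1=\sum_jp_j$. *)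

theory Defs
  imports "HOL-Analysis.Analysis"
begin

definition zeta_nat :: "nat \<Rightarrow> real" where
  "zeta_nat d = (\<Sum>n. 1 / real (Suc n) ^ d)"

text \<open>Multi-indices s in Z_+^d, represented as extensional functions on {..<d}.\<close>
definition multi_idx :: "nat \<Rightarrow> (nat \<Rightarrow> nat) set" where
  "multi_idx d = PiE {..<d} (\<lambda>_. UNIV)"

text \<open>Tr[r G_kappa(beta) (1 - r G_kappa(beta))^{-1}], written out as the sum over the
  spectrum of h_kappa: eigenvalue |s|_1/kappa of h_kappa gives eigenvalue
  exp(-beta |s|_1/kappa) of G_kappa(beta).\<close>
definition trace_rG :: "nat \<Rightarrow> real \<Rightarrow> real \<Rightarrow> real \<Rightarrow> real" where
  "trace_rG d \<kappa> \<beta> r =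
     infsum (\<lambda>s. r * exp (- \<beta> * real (\<Sum>j<d. s j) / \<kappa>)
                   / (1 - r * exp (- \<beta> * real (\<Sum>j<d. s j) / \<kappa>))) (multi_idx d)"

definition r_kappa :: "nat \<Rightarrow> real \<Rightarrow> real \<Rightarrow> real \<Rightarrow> real \<Rightarrow> real" where
  "r_kappa d \<beta> \<mu> lam \<kappa> =
     (THE r. 0 < r \<and> r < 1 \<and>
        trace_rG d \<kappa> \<beta> r / \<kappa> ^ d = (\<beta> * \<mu> - ln r) / (\<beta> * lam))"

definition limit_integral :: "nat \<Rightarrow> real \<Rightarrow> real" where
  "limit_integral d r =
     (LINT p : {p \<in> space (PiM {..<d} (\<lambda>_. lborel)). \<forall>j<d. 0 \<le> p j}
        | PiM {..<d} (\<lambda>_. lborel). r / (exp (\<Sum>j<d. p j) - r))"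

end

theory Submission
  imports Defs "HOL-Real_Asymp.Real_Asymp"
begin

definition gf :: "real \<Rightarrow> real" where "gf x = x / (1 - exp (-x))"
definition psi :: "nat \<Rightarrow> real \<Rightarrow> real" where "psi d x = gf x ^ d - x ^ d"

lemma pow_diff_le:
  fixes a b :: real
  assumes "0 \<le> b" "b \<le> a"
  shows "a ^ n - b ^ n \<le> real n * a ^ (n - 1) * (a - b)"
proof (induction n)
  case 0 then show ?case by simp
next
  case (Suc n)
  have "a ^ Suc n - b ^ Suc n = a * (a ^ n - b ^ n) + b ^ n * (a - b)" by (simp add: algebra_simps)
  also have "\<dots> \<le> a * (real n * a ^ (n - 1) * (a - b)) + a ^ n * (a - b)"
    using Suc assms by (intro add_mono mult_left_mono mult_right_mono power_mono) auto
  also have "\<dots> = real (Suc n) * a ^ n * (a - b)"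
    by (cases n) (simp_all add: algebra_simps)
  finally show ?case by simp
qed

lemma gf_bounds:
  assumes "x > 0"
  shows "x \<le> gf x" "gf x - x \<le> (1 + x) * exp (-x)" "1 \<le> gf x" "gf x \<le> 1 + x"
proof -
  have e: "exp (-x) < 1" using assms by simp
  have e1: "1 + x \<le> exp x" by (rule exp_ge_add_one_self)
  have ex: "exp (-x) * exp x = 1" by (simp flip: exp_add)
  have pos: "0 < 1 - exp (-x)" using e by simp
  have "1 - exp (-x) \<le> x" using exp_ge_add_one_self[of "-x"] by simp
  thus "1 \<le> gf x" unfolding gf_def using pos by simp
  have "1 - exp (-x) \<le> 1" by simp
  hence "x * (1 - exp (-x)) \<le> x" using assms by (simp add: mult_left_le)
  thus "x \<le> gf x" unfolding gf_def using pos by (simp add: le_divide_eq)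
  have "(1 + x) * exp (-x) \<le> exp x * exp (-x)" by (intro mult_right_mono e1) simp
  also have "exp x * exp (-x) = 1" by (simp flip: exp_add)
  finally have "(1 + x) * exp (-x) \<le> 1" .
  moreover have "(1 + x) * (1 - exp (-x)) = 1 + x - (1 + x) * exp (-x)" by (simp add: algebra_simps)
  ultimately have "x \<le> (1 + x) * (1 - exp (-x))" by linarith
  have "(1 + x) * exp (-x) * exp (-x) \<le> 1 * exp (-x)"
    using \<open>(1 + x) * exp (-x) \<le> 1\<close> by (intro mult_right_mono) auto
  moreover have "(x + (1 + x) * exp (-x)) * (1 - exp (-x)) = x + exp (-x) - (1 + x) * exp (-x) * exp (-x)"
    by (simp add: algebra_simps)
  ultimately have "x \<le> (x + (1 + x) * exp (-x)) * (1 - exp (-x))" by linarith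
  hence "gf x \<le> x + (1 + x) * exp (-x)" unfolding gf_def using pos by (simp add: divide_le_eq)
  thus "gf x - x \<le> (1 + x) * exp (-x)" by simp
  thus "gf x \<le> 1 + x" using \<open>(1 + x) * exp (-x) \<le> 1\<close> by linarith
qed

lemma psi_nonneg: "x > 0 \<Longrightarrow> 0 \<le> psi d x"
  unfolding psi_def using gf_bounds(1)[of x] by (simp add: power_mono)

lemma psi_le:
  assumes "x > 0" "d > 0"
  shows "psi d x \<le> real d * real d ^ d"
proof -
  have g1: "gf x \<le> 1 + x" using gf_bounds(4)[OF assms(1)] .
  have "psi d x \<le> real d * gf x ^ (d - 1) * (gf x - x)"
    unfolding psi_def by (rule pow_diff_le) (use assms gf_bounds[of x] in auto)
  also have "\<dots> \<le> real d * (1 + x) ^ (d - 1) * ((1 + x) * exp (-x))"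
    using assms gf_bounds[of x] g1
    by (intro mult_mono mult_left_mono power_mono) auto
  also have "\<dots> = real d * ((1 + x) ^ d * exp (-x))"
    using assms by (cases d) auto
  also have "(1 + x) ^ d * exp (-x) \<le> real d ^ d"
  proof -
    have "(1 + x / real d) ^ d \<le> exp x"
      by (rule exp_ge_one_plus_x_over_n_power_n) (use assms in auto)
    moreover have "(1 + x) / real d \<le> 1 + x / real d"
      using assms by (simp add: divide_simps)
    hence "((1 + x) / real d) ^ d \<le> (1 + x / real d) ^ d"
      using assms by (intro power_mono) auto
    ultimately have "(1 + x) ^ d / real d ^ d \<le> exp x" by (simp add: power_divide)
    hence "(1 + x) ^ d \<le> real d ^ d * exp x" using assms by (simp add: divide_le_eq mult.commute)
    hence "(1 + x) ^ d * exp (-x) \<le> real d ^ d * exp x * exp (-x)"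
      by (intro mult_right_mono) auto
    thus ?thesis by (simp add: exp_minus_inverse mult.assoc)
  qed
  hence "real d * ((1 + x) ^ d * exp (-x)) \<le> real d * real d ^ d" by (intro mult_left_mono) auto
  finally show ?thesis .
qed

lemma gf_lim: "(gf \<longlongrightarrow> 1) (at_right 0)"
  unfolding gf_def by real_asymp

lemma psi_lim: "d > 0 \<Longrightarrow> (psi d \<longlongrightarrow> 1) (at_right 0)"
proof -
  assume d: "d > 0"
  have "((\<lambda>x. gf x ^ d - x ^ d) \<longlongrightarrow> 1 ^ d - 0 ^ d) (at_right 0)"
    by (intro tendsto_intros gf_lim tendsto_ident_at)
  thus ?thesis using d unfolding psi_def[abs_def] by (simp add: power_0_left)
qed


definition Pser :: "nat \<Rightarrow> real \<Rightarrow> real \<Rightarrow> real" where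
  "Pser d t r = (\<Sum>n. r ^ Suc n * psi d (real (Suc n) * t) / real (Suc n) ^ d)"
definition Li :: "nat \<Rightarrow> real \<Rightarrow> real" where
  "Li d r = (\<Sum>n. r ^ Suc n / real (Suc n) ^ d)"

lemma summable_invpow: "d \<ge> 2 \<Longrightarrow> summable (\<lambda>n. C / real (Suc n) ^ d)"
proof -
  assume "d \<ge> 2"
  hence "summable (\<lambda>n. inverse (real n ^ d))" by (rule inverse_power_summable)
  hence "summable (\<lambda>n. inverse (real (Suc n) ^ d))" by (subst summable_Suc_iff)
  hence "summable (\<lambda>n. C * inverse (real (Suc n) ^ d))" by (rule summable_mult)
  thus ?thesis by (simp add: field_simps)
qed

lemma tann:
  fixes a :: "nat \<Rightarrow> 'x \<Rightarrow> real"
  assumes d: "d \<ge> 2"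
  assumes lim: "\<And>n. ((\<lambda>x. a n x) \<longlongrightarrow> b n) F"
  assumes bd: "eventually (\<lambda>x. \<forall>n. \<bar>a n x\<bar> \<le> C / real (Suc n) ^ d) F"
  shows "((\<lambda>x. \<Sum>n. a n x) \<longlongrightarrow> (\<Sum>n. b n)) F"
proof (cases "F = bot")
  case True then show ?thesis by simp
next
  case False
  have "eventually (\<lambda>(k::nat, x). \<forall>n. \<bar>a n x\<bar> \<le> C / real (Suc n) ^ d) (at_top \<times>\<^sub>F F)"
    using bd by (subst eventually_prod2) (auto simp: sequentially_bot)
  hence "eventually (\<lambda>(k::nat, x). norm (a k x) \<le> C / real (Suc k) ^ d) (at_top \<times>\<^sub>F F)"
    by (rule eventually_mono) auto
  from tannerys_theorem[of a b F, OF lim this summable_invpow[OF d] False]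
  show ?thesis by blast
qed

lemma summable_bd:
  fixes f :: "nat \<Rightarrow> real"
  assumes "d \<ge> 2" "\<And>n. \<bar>f n\<bar> \<le> C / real (Suc n) ^ d"
  shows "summable f"
  by (rule summable_comparison_test[OF _ summable_invpow[OF assms(1)]]) (use assms(2) in auto)

lemma Pser_term_bd:
  assumes "d \<ge> 2" "t > 0" "\<bar>r\<bar> \<le> 1"
  shows "\<bar>r ^ Suc n * psi d (real (Suc n) * t) / real (Suc n) ^ d\<bar> \<le> (real d * real d ^ d) / real (Suc n) ^ d"
proof -
  have p0: "0 \<le> psi d (real (Suc n) * t)" by (rule psi_nonneg) (use assms in auto)
  have p1: "psi d (real (Suc n) * t) \<le> real d * real d ^ d" by (rule psi_le) (use assms in auto)
  have "\<bar>r\<bar> ^ Suc n \<le> 1" using assms by (intro power_le_one) auto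
  hence "\<bar>r ^ Suc n\<bar> \<le> 1" by (simp only: power_abs)
  hence "\<bar>r ^ Suc n\<bar> * psi d (real (Suc n) * t) \<le> 1 * (real d * real d ^ d)"
    using p0 p1 by (intro mult_mono) auto
  moreover have "\<bar>r ^ Suc n * psi d (real (Suc n) * t)\<bar> = \<bar>r ^ Suc n\<bar> * psi d (real (Suc n) * t)"
    using p0 by (simp only: abs_mult abs_of_nonneg)
  ultimately have "\<bar>r ^ Suc n * psi d (real (Suc n) * t)\<bar> \<le> 1 * (real d * real d ^ d)" by simp
  thus ?thesis by (simp add: abs_mult divide_right_mono)
qed

lemma Li_term_bd:
  assumes "\<bar>r\<bar> \<le> (1::real)"
  shows "\<bar>r ^ Suc n / real (Suc n) ^ d\<bar> \<le> 1 / real (Suc n) ^ d"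
proof -
  have "\<bar>r\<bar> ^ Suc n \<le> 1" using assms by (intro power_le_one) auto
  hence "\<bar>r ^ Suc n\<bar> \<le> 1" by (simp only: power_abs)
  thus ?thesis by (simp add: divide_right_mono)
qed

lemma Pser_summable:
  "d \<ge> 2 \<Longrightarrow> t > 0 \<Longrightarrow> \<bar>r\<bar> \<le> 1 \<Longrightarrow> summable (\<lambda>n. r ^ Suc n * psi d (real (Suc n) * t) / real (Suc n) ^ d)"
  by (rule summable_bd[OF _ Pser_term_bd]) auto

lemma Li_summable:
  "d \<ge> 2 \<Longrightarrow> \<bar>r\<bar> \<le> 1 \<Longrightarrow> summable (\<lambda>n. r ^ Suc n / real (Suc n) ^ d)"
  by (rule summable_bd[OF _ Li_term_bd]) auto

lemma Pser_nonneg: "d \<ge> 2 \<Longrightarrow> t > 0 \<Longrightarrow> 0 \<le> r \<Longrightarrow> r \<le> 1 \<Longrightarrow> 0 \<le> Pser d t r"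
  unfolding Pser_def by (intro suminf_nonneg Pser_summable) (auto intro!: divide_nonneg_nonneg mult_nonneg_nonneg psi_nonneg)

lemma Pser_mono: "d \<ge> 2 \<Longrightarrow> t > 0 \<Longrightarrow> 0 \<le> r1 \<Longrightarrow> r1 \<le> r2 \<Longrightarrow> r2 \<le> 1 \<Longrightarrow> Pser d t r1 \<le> Pser d t r2"
  unfolding Pser_def
  by (intro suminf_le Pser_summable divide_right_mono mult_right_mono power_mono psi_nonneg allI) auto

lemma Li_mono: "d \<ge> 2 \<Longrightarrow> 0 \<le> r1 \<Longrightarrow> r1 \<le> r2 \<Longrightarrow> r2 \<le> 1 \<Longrightarrow> Li d r1 \<le> Li d r2"
  unfolding Li_def
  by (intro suminf_le Li_summable divide_right_mono power_mono allI) auto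

lemma Li_nonneg: "d \<ge> 2 \<Longrightarrow> 0 \<le> r \<Longrightarrow> r \<le> 1 \<Longrightarrow> 0 \<le> Li d r"
  unfolding Li_def by (intro suminf_nonneg Li_summable) auto

lemma Li_one: "Li d 1 = zeta_nat d"
  unfolding Li_def zeta_nat_def by simp

lemma eventually_within_self: "eventually (\<lambda>y. y \<in> S) (at x within S)"
  unfolding eventually_at_filter by simp

lemma Pser_cont:
  assumes "d \<ge> 2" "t > 0"
  shows "continuous_on {0..1} (Pser d t)"
  unfolding continuous_on_def
proof safe
  fix r0 :: real assume r0: "r0 \<in> {0..1}"
  have ev: "eventually (\<lambda>r. r \<in> {0..1::real}) (at r0 within {0..1})" by (rule eventually_within_self)
  show "(Pser d t \<longlongrightarrow> Pser d t r0) (at r0 within {0..1})"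
    unfolding Pser_def
  proof (rule tann[OF assms(1), where a="\<lambda>n r. r ^ Suc n * psi d (real (Suc n) * t) / real (Suc n) ^ d"])
    fix n show "((\<lambda>r. r ^ Suc n * psi d (real (Suc n) * t) / real (Suc n) ^ d) \<longlongrightarrow> r0 ^ Suc n * psi d (real (Suc n) * t) / real (Suc n) ^ d) (at r0 within {0..1})"
      by (intro tendsto_intros) (simp del: of_nat_Suc)
  next
    show "eventually (\<lambda>r. \<forall>n. \<bar>r ^ Suc n * psi d (real (Suc n) * t) / real (Suc n) ^ d\<bar> \<le> (real d * real d ^ d) / real (Suc n) ^ d) (at r0 within {0..1})"
      by (rule eventually_mono[OF ev]) (use Pser_term_bd assms in auto)
  qed
qed

lemma Li_lim:
  assumes "d \<ge> 2" "(rf \<longlongrightarrow> \<rho>) F" "eventually (\<lambda>x. 0 \<le> rf x \<and> rf x \<le> 1) F"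
  shows "((\<lambda>x. Li d (rf x)) \<longlongrightarrow> Li d \<rho>) F"
  unfolding Li_def
proof (rule tann[OF assms(1), where a="\<lambda>n x. rf x ^ Suc n / real (Suc n) ^ d"])
  fix n show "((\<lambda>x. rf x ^ Suc n / real (Suc n) ^ d) \<longlongrightarrow> \<rho> ^ Suc n / real (Suc n) ^ d) F"
    by (intro tendsto_intros assms(2)) (simp del: of_nat_Suc)
next
  show "eventually (\<lambda>x. \<forall>n. \<bar>rf x ^ Suc n / real (Suc n) ^ d\<bar> \<le> 1 / real (Suc n) ^ d) F"
    by (rule eventually_mono[OF assms(3)], intro allI Li_term_bd) auto
qed

lemma Pser_lim:
  assumes d: "d \<ge> 2" and t: "(tf \<longlongrightarrow> 0) F" "eventually (\<lambda>x. tf x > 0) F"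
    and r: "(rf \<longlongrightarrow> \<rho>) F" "eventually (\<lambda>x. 0 \<le> rf x \<and> rf x \<le> 1) F"
  shows "((\<lambda>x. Pser d (tf x) (rf x)) \<longlongrightarrow> Li d \<rho>) F"
  unfolding Pser_def Li_def
proof (rule tann[OF d, where a="\<lambda>n x. rf x ^ Suc n * psi d (real (Suc n) * tf x) / real (Suc n) ^ d"])
  fix n
  have "filterlim (\<lambda>x. real (Suc n) * tf x) (at_right 0) F"
  proof (rule tendsto_imp_filterlim_at_right)
    show "((\<lambda>x. real (Suc n) * tf x) \<longlongrightarrow> 0) F" using tendsto_mult_right_zero[OF t(1)] by simp
    show "eventually (\<lambda>x. real (Suc n) * tf x > 0) F" by (rule eventually_mono[OF t(2)]) auto
  qed
  hence "((\<lambda>x. psi d (real (Suc n) * tf x)) \<longlongrightarrow> 1) F"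
  proof -
    have pl: "(psi d \<longlongrightarrow> 1) (at_right 0)" using d by (intro psi_lim) auto
    show ?thesis by (rule filterlim_compose[OF pl]) fact
  qed
  hence "((\<lambda>x. rf x ^ Suc n * psi d (real (Suc n) * tf x) / real (Suc n) ^ d) \<longlongrightarrow> \<rho> ^ Suc n * 1 / real (Suc n) ^ d) F"
    by (intro tendsto_intros r(1)) (auto simp del: of_nat_Suc)
  thus "((\<lambda>x. rf x ^ Suc n * psi d (real (Suc n) * tf x) / real (Suc n) ^ d) \<longlongrightarrow> \<rho> ^ Suc n / real (Suc n) ^ d) F"
    by (simp only: mult_1_right)
next
  show "eventually (\<lambda>x. \<forall>n. \<bar>rf x ^ Suc n * psi d (real (Suc n) * tf x) / real (Suc n) ^ d\<bar> \<le> (real d * real d ^ d) / real (Suc n) ^ d) F"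
    by (rule eventually_mono[OF eventually_conj[OF t(2) r(2)]]) (use Pser_term_bd d in auto)
qed


lemma geom_has_sum:
  assumes "0 \<le> y" "y < (1::real)"
  shows "((\<lambda>k. y ^ k) has_sum (1 / (1 - y))) UNIV"
  by (rule sums_nonneg_imp_has_sum) (use geometric_sums[of y] assms in auto)

lemma geom1_has_sum:
  assumes "0 \<le> x" "x < (1::real)"
  shows "((\<lambda>n. x ^ Suc n) has_sum (x / (1 - x))) UNIV"
proof (rule sums_nonneg_imp_has_sum)
  have "(\<lambda>n. x * x ^ n) sums (x * (1 / (1 - x)))"
    by (rule sums_mult) (use geometric_sums[of x] assms in auto)
  thus "(\<lambda>n. x ^ Suc n) sums (x / (1 - x))" by simp
qed (use assms in auto)

lemma PiE_geom_has_sum: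
  assumes "0 \<le> y" "y < (1::real)"
  shows "((\<lambda>s. \<Prod>j<d. y ^ s j) has_sum ((1 / (1 - y)) ^ d)) (multi_idx d)"
proof -
  have g: "((\<lambda>k. y ^ k) has_sum (1 / (1 - y))) UNIV" by (rule geom_has_sum) fact+
  have abs: "(\<lambda>k. norm (y ^ k)) summable_on UNIV"
    using g assms by (simp add: summable_on_def abs_of_nonneg) blast
  have val: "infsum (\<lambda>s. \<Prod>j\<in>{..<d}. y ^ s j) (PiE {..<d} (\<lambda>_. UNIV)) = (\<Prod>j\<in>{..<d}. infsum (\<lambda>k. y ^ k) UNIV)"
    by (rule infsum_prod_PiE_abs[where f="\<lambda>_ k. y ^ k"]) (use abs in auto)
  also have "\<dots> = (1 / (1 - y)) ^ d" using infsumI[OF g] by simp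
  finally have val': "infsum (\<lambda>s. \<Prod>j<d. y ^ s j) (multi_idx d) = (1 / (1 - y)) ^ d"
    unfolding multi_idx_def .
  have "(1 / (1 - y)) ^ d \<noteq> 0" using assms by simp
  hence "(\<lambda>s. \<Prod>j<d. y ^ s j) summable_on (multi_idx d)"
    using val' infsum_not_exists by metis
  thus ?thesis using val' has_sum_infsum by metis
qed

lemma trace_series:
  assumes k: "\<kappa> > 0" and b: "\<beta> > 0" and r: "0 < r" "r < 1"
  shows "trace_rG d \<kappa> \<beta> r = (\<Sum>n. r ^ Suc n * (1 / (1 - exp (-\<beta>/\<kappa>) ^ Suc n)) ^ d)"
proof -
  define q where "q = exp (-\<beta>/\<kappa>)"
  have q: "0 < q" "q < 1" unfolding q_def using k b by auto
  define h where "h = (\<lambda>(n::nat, s::nat\<Rightarrow>nat). r ^ Suc n * (\<Prod>j<d. (q ^ Suc n) ^ s j))"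
  define g where "g = (\<lambda>n::nat. r ^ Suc n * (1 / (1 - q ^ Suc n)) ^ d)"
  have qn0: "0 \<le> q ^ Suc n" for n using q by simp
  have qn1: "q ^ Suc n < 1" for n by (rule power_Suc_less_one) (use q in auto)
  note qn = qn0 qn1
  have hs: "((\<lambda>s. h (n, s)) has_sum g n) (multi_idx d)" for n
    unfolding h_def g_def using PiE_geom_has_sum[OF qn[of n], of d]
    by (simp add: has_sum_cmult_right)
  have gpos: "0 \<le> g n" for n unfolding g_def using q qn[of n] r by auto
  have gbd: "g n \<le> r ^ Suc n * (1 / (1 - q)) ^ d" for n
  proof -
    have "q ^ Suc n \<le> q" using power_decreasing[of 1 "Suc n" q] q by simp
    hence "1 / (1 - q ^ Suc n) \<le> 1 / (1 - q)" using q qn[of n] by (intro divide_left_mono) auto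
    hence "(1 / (1 - q ^ Suc n)) ^ d \<le> (1 / (1 - q)) ^ d" using qn[of n] by (intro power_mono) auto
    thus ?thesis unfolding g_def using r by (intro mult_left_mono) auto
  qed
  have "summable (\<lambda>n. r ^ Suc n * (1 / (1 - q)) ^ d)"
    using r by (intro summable_mult2) (simp add: summable_geometric)
  hence gsum: "summable g" by (rule summable_comparison_test[rotated]) (use gbd gpos in auto)
  hence gsum': "g summable_on UNIV" by (rule summable_nonneg_imp_summable_on) (use gpos in auto)
  have hnn: "0 \<le> h (n, s)" for n s unfolding h_def using r q by (simp only: prod.case, intro mult_nonneg_nonneg prod_nonneg zero_le_power) auto
  have hsum: "h summable_on (UNIV \<times> multi_idx d)"
    using summable_on_SigmaI[where f=h and A=UNIV and B="\<lambda>_. multi_idx d" and g=g, OF hs gsum' hnn] by simp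
  have swap: "infsum (\<lambda>n. infsum (\<lambda>s. h (n, s)) (multi_idx d)) UNIV = infsum (\<lambda>s. infsum (\<lambda>n. h (n, s)) UNIV) (multi_idx d)"
    by (rule infsum_swap_banach) (use hsum in simp)
  have "infsum (\<lambda>n. infsum (\<lambda>s. h (n, s)) (multi_idx d)) UNIV = infsum g UNIV"
    using infsumI[OF hs] by (intro infsum_cong) simp
  also have "\<dots> = suminf g"
    using has_sum_imp_sums[OF has_sum_infsum[OF gsum']] sums_unique by metis
  finally have L: "infsum (\<lambda>n. infsum (\<lambda>s. h (n, s)) (multi_idx d)) UNIV = suminf g" .
  have R: "infsum (\<lambda>n. h (n, s)) UNIV = r * exp (- \<beta> * real (\<Sum>j<d. s j) / \<kappa>) / (1 - r * exp (- \<beta> * real (\<Sum>j<d. s j) / \<kappa>))" for s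
  proof -
    define m where "m = (\<Sum>j<d. s j)"
    have e: "exp (- \<beta> * real m / \<kappa>) = q ^ m"
      unfolding q_def by (subst exp_of_nat_mult[symmetric]) (simp add: field_simps)
    have x0: "0 \<le> r * q ^ m" using q r by simp
    have "q ^ m \<le> 1" by (rule power_le_one) (use q in auto)
    hence "r * q ^ m \<le> r * 1" using r by (intro mult_left_mono) auto
    hence x1: "r * q ^ m < 1" using r by linarith
    note x = x0 x1
    have "h (n, s) = (r * q ^ m) ^ Suc n" for n
    proof -
      have e1: "(q ^ m) ^ Suc n = (q ^ Suc n) ^ m" by (metis power_mult mult.commute)
      have e2: "(q ^ Suc n) ^ m = (\<Prod>j<d. (q ^ Suc n) ^ s j)" unfolding m_def by (rule power_sum)
      show ?thesis unfolding h_def by (simp only: prod.case power_mult_distrib e1 e2)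
    qed
    hence "infsum (\<lambda>n. h (n, s)) UNIV = r * q ^ m / (1 - r * q ^ m)"
      using infsumI[OF geom1_has_sum[OF x]] by simp
    thus ?thesis using e m_def by simp
  qed
  show ?thesis
    unfolding trace_rG_def using swap L R q_def g_def by simp
qed


definition Hf :: "real \<Rightarrow> real \<Rightarrow> real \<Rightarrow> real \<Rightarrow> real" where
  "Hf \<beta> \<mu> lam r = (\<beta> * \<mu> - ln r) / (\<beta> * lam)"
definition Fk :: "nat \<Rightarrow> real \<Rightarrow> real \<Rightarrow> real \<Rightarrow> real" where
  "Fk d \<beta> \<kappa> r = Pser d (\<beta> / \<kappa>) r / \<beta> ^ d + r / ((1 - r) * \<kappa> ^ d)"

lemma term_identity:
  assumes k: "\<kappa> > 0" and b: "\<beta> > 0"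
  shows "r ^ Suc n * (1 / (1 - exp (-\<beta>/\<kappa>) ^ Suc n)) ^ d / \<kappa> ^ d =
         r ^ Suc n * psi d (real (Suc n) * (\<beta> / \<kappa>)) / real (Suc n) ^ d / \<beta> ^ d + r ^ Suc n / \<kappa> ^ d"
proof -
  define x where "x = real (Suc n) * (\<beta> / \<kappa>)"
  have x: "x > 0" unfolding x_def using k b by simp
  have E: "exp (-\<beta>/\<kappa>) ^ Suc n = exp (-x)"
    unfolding x_def by (subst exp_of_nat_mult[symmetric]) (simp add: field_simps)
  have E1: "exp (-x) < 1" using x by simp
  define A where "A = (1 / (1 - exp (-x))) ^ d"
  have "psi d x = x ^ d * A - x ^ d"
    unfolding psi_def gf_def A_def by (simp add: power_divide)
  hence p1: "psi d x = x ^ d * (A - 1)" by (simp add: algebra_simps)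
  have xd: "x ^ d = real (Suc n) ^ d * \<beta> ^ d / \<kappa> ^ d"
    unfolding x_def by (simp add: power_mult_distrib power_divide)
  have p: "psi d x = real (Suc n) ^ d * \<beta> ^ d / \<kappa> ^ d * (A - 1)"
    by (simp only: p1 xd)
  have "r ^ Suc n * psi d x / real (Suc n) ^ d / \<beta> ^ d + r ^ Suc n / \<kappa> ^ d = r ^ Suc n * A / \<kappa> ^ d"
    unfolding p using k b by (simp add: field_simps del: of_nat_Suc)
  thus ?thesis unfolding E A_def x_def[symmetric] by simp
qed

lemma trace_Fk:
  assumes d: "d \<ge> 2" and k: "\<kappa> > 0" and b: "\<beta> > 0" and r: "0 < r" "r < 1"
  shows "trace_rG d \<kappa> \<beta> r / \<kappa> ^ d = Fk d \<beta> \<kappa> r"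
proof -
  have "summable (\<lambda>n. r ^ Suc n * psi d (real (Suc n) * (\<beta> / \<kappa>)) / real (Suc n) ^ d)"
    by (rule Pser_summable) (use d k b r in auto)
  hence s1: "summable (\<lambda>n. r ^ Suc n * psi d (real (Suc n) * (\<beta> / \<kappa>)) / real (Suc n) ^ d / \<beta> ^ d)"
    by (rule summable_divide)
  have g: "(\<lambda>n. r ^ Suc n) sums (r / (1 - r))"
    using has_sum_imp_sums[OF geom1_has_sum[of r]] r by simp
  have s2: "(\<lambda>n. r ^ Suc n / \<kappa> ^ d) sums (r / (1 - r) / \<kappa> ^ d)"
    by (rule sums_divide[OF g])
  have "trace_rG d \<kappa> \<beta> r / \<kappa> ^ d = (\<Sum>n. r ^ Suc n * (1 / (1 - exp (-\<beta>/\<kappa>) ^ Suc n)) ^ d) / \<kappa> ^ d"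
    using trace_series[OF k b r] by simp
  also have "\<dots> = (\<Sum>n. r ^ Suc n * (1 / (1 - exp (-\<beta>/\<kappa>) ^ Suc n)) ^ d / \<kappa> ^ d)"
  proof -
    have "summable (\<lambda>n. r ^ Suc n * psi d (real (Suc n) * (\<beta> / \<kappa>)) / real (Suc n) ^ d / \<beta> ^ d + r ^ Suc n / \<kappa> ^ d)"
      using s1 s2 by (intro summable_add) (auto simp: sums_iff)
    hence "summable (\<lambda>n. r ^ Suc n * (1 / (1 - exp (-\<beta>/\<kappa>) ^ Suc n)) ^ d / \<kappa> ^ d)"
      by (subst term_identity[OF k b])
    hence "summable (\<lambda>n. r ^ Suc n * (1 / (1 - exp (-\<beta>/\<kappa>) ^ Suc n)) ^ d)"
      using k by (simp add: summable_divide_iff)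
    thus ?thesis by (rule suminf_divide[symmetric])
  qed
  also have "\<dots> = (\<Sum>n. r ^ Suc n * psi d (real (Suc n) * (\<beta> / \<kappa>)) / real (Suc n) ^ d / \<beta> ^ d + r ^ Suc n / \<kappa> ^ d)"
    by (subst term_identity[OF k b]) rule
  also have "\<dots> = (\<Sum>n. r ^ Suc n * psi d (real (Suc n) * (\<beta> / \<kappa>)) / real (Suc n) ^ d / \<beta> ^ d) + r / (1 - r) / \<kappa> ^ d"
    using suminf_add[OF s1 sums_summable[OF s2]] sums_unique[OF s2] by simp
  also have "(\<Sum>n. r ^ Suc n * psi d (real (Suc n) * (\<beta> / \<kappa>)) / real (Suc n) ^ d / \<beta> ^ d) = Pser d (\<beta> / \<kappa>) r / \<beta> ^ d"
    unfolding Pser_def by (rule suminf_divide, rule Pser_summable) (use d k b r in auto)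
  finally show ?thesis unfolding Fk_def by simp
qed

lemma Fk_mono:
  assumes d: "d \<ge> 2" and k: "\<kappa> > 0" and b: "\<beta> > 0" and r: "0 < r1" "r1 \<le> r2" "r2 < 1"
  shows "Fk d \<beta> \<kappa> r1 \<le> Fk d \<beta> \<kappa> r2"
proof -
  have "Pser d (\<beta> / \<kappa>) r1 \<le> Pser d (\<beta> / \<kappa>) r2" by (rule Pser_mono) (use assms in auto)
  hence 1: "Pser d (\<beta> / \<kappa>) r1 / \<beta> ^ d \<le> Pser d (\<beta> / \<kappa>) r2 / \<beta> ^ d" using b by (simp add: divide_right_mono)
  have "r1 / (1 - r1) \<le> r2 / (1 - r2)" using r by (simp add: divide_simps) (simp add: algebra_simps)
  hence "r1 / (1 - r1) / \<kappa> ^ d \<le> r2 / (1 - r2) / \<kappa> ^ d" by (rule divide_right_mono) (use k in auto)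
  thus ?thesis unfolding Fk_def using 1 by (simp add: divide_divide_eq_left)
qed

lemma Hf_strict:
  assumes "\<beta> > 0" "lam > 0" "0 < r1" "r1 < r2"
  shows "Hf \<beta> \<mu> lam r2 < Hf \<beta> \<mu> lam r1"
proof -
  have "ln r1 < ln r2" using assms by simp
  thus ?thesis unfolding Hf_def using assms by (simp add: divide_strict_right_mono)
qed

lemma Fk_cont:
  assumes d: "d \<ge> 2" and k: "\<kappa> > 0" and b: "\<beta> > 0" and ab: "0 < a" "b' < 1"
  shows "continuous_on {a..b'} (Fk d \<beta> \<kappa>)"
proof -
  have P: "continuous_on {a..b'} (Pser d (\<beta> / \<kappa>))"
    by (rule continuous_on_subset[OF Pser_cont]) (use assms in auto)
  have c1: "continuous_on {a..b'} (\<lambda>r. Pser d (\<beta> / \<kappa>) r / \<beta> ^ d)"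
    by (rule continuous_on_divide[OF P continuous_on_const]) (use b in auto)
  have c2: "continuous_on {a..b'} (\<lambda>r. r / ((1 - r) * \<kappa> ^ d))"
    by (intro continuous_intros) (use assms in auto)
  show ?thesis unfolding Fk_def[abs_def] by (rule continuous_on_add[OF c1 c2])
qed

lemma rk_ex1:
  assumes d: "d \<ge> 2" and k: "\<kappa> > 0" and b: "\<beta> > 0" and l: "lam > 0"
  shows "\<exists>!r. 0 < r \<and> r < 1 \<and> trace_rG d \<kappa> \<beta> r / \<kappa> ^ d = (\<beta> * \<mu> - ln r) / (\<beta> * lam)"
proof -
  let ?F = "Fk d \<beta> \<kappa>" and ?H = "Hf \<beta> \<mu> lam"
  have eq: "(0 < r \<and> r < 1 \<and> trace_rG d \<kappa> \<beta> r / \<kappa> ^ d = (\<beta> * \<mu> - ln r) / (\<beta> * lam)) \<longleftrightarrow>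
            (0 < r \<and> r < 1 \<and> ?F r = ?H r)" for r
    using trace_Fk[OF d k b, of r] unfolding Hf_def by auto
  define B where "B = Pser d (\<beta> / \<kappa>) 1 / \<beta> ^ d + 1 / \<kappa> ^ d"
  define Z where "Z = \<beta> * \<mu> - (B + 1) * (\<beta> * lam)"
  define a where "a = min (1/2) (exp Z / 2)"
  have a: "0 < a" "a \<le> 1/2" unfolding a_def by auto
  have "ln a \<le> ln (exp Z / 2)" using a unfolding a_def by (subst ln_le_cancel_iff) auto
  also have "\<dots> < Z" by (simp add: ln_div)
  finally have lna: "ln a < Z" .
  have Fa: "?F a \<le> B"
  proof -
    have "Pser d (\<beta> / \<kappa>) a \<le> Pser d (\<beta> / \<kappa>) 1" by (rule Pser_mono) (use a d k b in auto)
    hence 1: "Pser d (\<beta> / \<kappa>) a / \<beta> ^ d \<le> Pser d (\<beta> / \<kappa>) 1 / \<beta> ^ d" using b by (simp add: divide_right_mono)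
    have "a / (1 - a) \<le> 1" using a by (simp add: divide_simps)
    hence "a / (1 - a) / \<kappa> ^ d \<le> 1 / \<kappa> ^ d" by (rule divide_right_mono) (use k in auto)
    thus ?thesis unfolding Fk_def B_def using 1 by (simp add: divide_divide_eq_left)
  qed
  have Ha: "?H a > B"
  proof -
    have "(B + 1) * (\<beta> * lam) < \<beta> * \<mu> - ln a" using lna unfolding Z_def by simp
    hence "B + 1 < (\<beta> * \<mu> - ln a) / (\<beta> * lam)" using b l by (simp add: pos_less_divide_eq)
    thus ?thesis unfolding Hf_def by simp
  qed
  define K where "K = \<bar>?H (1/2)\<bar> * \<kappa> ^ d"
  define b' where "b' = (K + 1) / (K + 2)"
  have K: "K \<ge> 0" unfolding K_def using k by simp
  have b': "1/2 \<le> b'" "b' < 1" unfolding b'_def using K by (simp_all add: divide_simps)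
  have "b' / (1 - b') = K + 1" unfolding b'_def using K by (simp add: divide_simps)
  hence "b' / ((1 - b') * \<kappa> ^ d) = (K + 1) / \<kappa> ^ d" by (simp flip: divide_divide_eq_left)
  also have "\<dots> > \<bar>?H (1/2)\<bar>" unfolding K_def using k by (simp add: divide_simps)
  finally have 2: "b' / ((1 - b') * \<kappa> ^ d) > \<bar>?H (1/2)\<bar>" .
  have "Pser d (\<beta> / \<kappa>) b' \<ge> 0" by (rule Pser_nonneg) (use d k b b' in auto)
  hence Fb: "?F b' > \<bar>?H (1/2)\<bar>" unfolding Fk_def using 2 b by (smt (verit) divide_nonneg_pos zero_less_power)
  have Hb: "?H b' \<le> ?H (1/2)"
  proof (cases "b' = 1/2")
    case True show ?thesis unfolding True by (rule order_refl)
  next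
    case False thus ?thesis using Hf_strict[OF b l, of "1/2" b' \<mu>] b' by auto
  qed
  have G: "\<exists>x. a \<le> x \<and> x \<le> b' \<and> (\<lambda>r. ?F r - ?H r) x = 0"
  proof (rule IVT')
    show "?F a - ?H a \<le> 0" using Fa Ha by simp
    show "0 \<le> ?F b' - ?H b'" using Fb Hb by simp
    show "a \<le> b'" using a b' by simp
    have "continuous_on {a..b'} ?F" by (rule Fk_cont) (use d k b a b' in auto)
    moreover have "continuous_on {a..b'} ?H"
      unfolding Hf_def[abs_def] by (intro continuous_intros) (use a b l in auto)
    ultimately show "continuous_on {a..b'} (\<lambda>r. ?F r - ?H r)" by (intro continuous_intros)
  qed
  then obtain x where x: "a \<le> x" "x \<le> b'" "?F x = ?H x" by auto
  have ex: "0 < x \<and> x < 1 \<and> ?F x = ?H x" using x a b' by auto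
  have uniq: "y = x" if y: "0 < y \<and> y < 1 \<and> ?F y = ?H y" for y
  proof (rule ccontr)
    assume ne: "y \<noteq> x"
    have less: False if "0 < u" "u < v" "v < 1" "?F u = ?H u" "?F v = ?H v" for u v
      using Fk_mono[OF d k b, of u v] Hf_strict[OF b l, of u v \<mu>] that by auto
    show False using less[of x y] less[of y x] ex y ne by (cases "x < y") auto
  qed
  show ?thesis unfolding eq using ex uniq by blast
qed

lemma rk_char:
  fixes \<mu> :: real
  assumes d: "d \<ge> 2" and k: "\<kappa> > 0" and b: "\<beta> > 0" and l: "lam > 0"
  defines "r \<equiv> r_kappa d \<beta> \<mu> lam \<kappa>"
  shows "0 < r" "r < 1" "Fk d \<beta> \<kappa> r = Hf \<beta> \<mu> lam r"
proof -
  have "0 < r \<and> r < 1 \<and> trace_rG d \<kappa> \<beta> r / \<kappa> ^ d = (\<beta> * \<mu> - ln r) / (\<beta> * lam)"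
    unfolding r_def r_kappa_def by (rule theI'[OF rk_ex1[OF d k b l]])
  thus "0 < r" "r < 1" "Fk d \<beta> \<kappa> r = Hf \<beta> \<mu> lam r"
    using trace_Fk[OF d k b, of r] unfolding Hf_def by auto
qed


lemma exp_1d_nn:
  assumes c: "c > (0::real)"
  shows "(\<integral>\<^sup>+ x. ennreal (indicator {0..} x * exp (- c * x)) \<partial>lborel) = ennreal (1 / c)"
proof -
  have "((\<lambda>x::real. exp (-c*x)) has_integral exp (-c*0)/c) {0..}"
    by (rule has_integral_exp_minus_to_infinity) fact
  hence "((\<lambda>x::real. if x \<in> {0..} then exp (-c*x) else 0) has_integral 1/c) UNIV"
    by (subst has_integral_restrict_UNIV) simp
  hence I: "((\<lambda>x::real. indicator {0..} x * exp (-c*x)) has_integral 1/c) UNIV"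
    by (rule has_integral_eq[rotated]) (simp add: indicator_def)
  show ?thesis
    by (rule nn_integral_has_integral_lborel[OF _ _ I]) auto
qed

lemma limit_integral_Li:
  assumes r: "0 < r" "r < 1" and d: "d \<ge> 2"
  shows "limit_integral d r = Li d r"
proof -
  define M where "M = PiM {..<d} (\<lambda>_::nat. lborel :: real measure)"
  define S where "S = {p \<in> space M. \<forall>j<d. 0 \<le> p j}"
  define f where "f = (\<lambda>p::nat\<Rightarrow>real. r / (exp (\<Sum>j<d. p j) - r))"
  interpret product_sigma_finite "\<lambda>_::nat. lborel :: real measure" by standard
  have Smeas: "S \<in> sets M" unfolding S_def M_def by measurable
  have fmeas: "f \<in> borel_measurable M" unfolding f_def M_def by measurable
  define g where "g = (\<lambda>k::nat. \<lambda>p::nat\<Rightarrow>real. r ^ Suc k * (\<Prod>j<d. indicator {0..} (p j) * exp (- real (Suc k) * p j)))"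
  have gnn: "0 \<le> g k p" for k p unfolding g_def using r by (auto intro!: prod_nonneg mult_nonneg_nonneg)
  have sums_g: "(\<lambda>k. g k p) sums (indicator S p * f p)" if p: "p \<in> space M" for p
  proof (cases "p \<in> S")
    case True
    hence nn: "\<forall>j<d. 0 \<le> p j" unfolding S_def by auto
    define s where "s = (\<Sum>j<d. p j)"
    have s0: "0 \<le> s" unfolding s_def using nn by (auto intro!: sum_nonneg)
    define x where "x = r * exp (- s)"
    have x0: "0 \<le> x" unfolding x_def using r by simp
    have "exp (-s) \<le> 1" using s0 by simp
    hence "x \<le> r * 1" unfolding x_def using r by (intro mult_left_mono) auto
    hence x1: "x < 1" using r by linarith
    have gk: "g k p = x ^ Suc k" for k
    proof -
      have "g k p = r ^ Suc k * (\<Prod>j<d. exp (- real (Suc k) * p j))"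
        unfolding g_def using nn by (intro arg_cong[where f="\<lambda>z. r ^ Suc k * z"] prod.cong) auto
      also have "(\<Prod>j<d. exp (- real (Suc k) * p j)) = exp (\<Sum>j<d. - real (Suc k) * p j)"
        by (simp add: exp_sum)
      also have "(\<Sum>j<d. - real (Suc k) * p j) = - real (Suc k) * (\<Sum>j<d. p j)"
        by (rule sum_distrib_left[symmetric])
      also have "\<dots> = real (Suc k) * (- s)" unfolding s_def by (simp only: mult_minus_left mult_minus_right)
      also have "exp (real (Suc k) * (- s)) = exp (- s) ^ Suc k" by (rule exp_of_nat_mult)
      finally show ?thesis unfolding x_def by (simp add: power_mult_distrib)
    qed
    have "f p = x / (1 - x)"
    proof -
      have e: "exp s * exp (-s) = 1" by (simp flip: exp_add)
      have d1: "1 - x = (exp s - r) * exp (-s)" unfolding x_def using e by (simp add: algebra_simps)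
      show ?thesis unfolding f_def s_def[symmetric] d1 unfolding x_def by simp
    qed
    thus ?thesis using has_sum_imp_sums[OF geom1_has_sum[OF x0 x1]] True gk by simp
  next
    case False
    then obtain j where j: "j < d" "p j < 0" using p unfolding S_def by auto
    have "g k p = 0" for k unfolding g_def using j by (auto intro!: prod_zero bexI[of _ j])
    thus ?thesis using False by simp
  qed
  have nn_eq: "(\<integral>\<^sup>+ p. ennreal (indicator S p * f p) \<partial>M) = (\<integral>\<^sup>+ p. (\<Sum>k. ennreal (g k p)) \<partial>M)"
    by (rule nn_integral_cong) (rule suminf_ennreal_eq[symmetric, OF gnn sums_g])
  also have "\<dots> = (\<Sum>k. \<integral>\<^sup>+ p. ennreal (g k p) \<partial>M)"
    by (rule nn_integral_suminf) (simp add: g_def M_def)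
  also have "\<dots> = (\<Sum>k. ennreal (r ^ Suc k / real (Suc k) ^ d))"
  proof (rule suminf_cong)
    fix k
    have "(\<integral>\<^sup>+ p. ennreal (g k p) \<partial>M) = (\<integral>\<^sup>+ p. ennreal (r ^ Suc k) * (\<Prod>j<d. ennreal (indicator {0..} (p j) * exp (- real (Suc k) * p j))) \<partial>M)"
    proof (intro nn_integral_cong)
      fix p :: "nat \<Rightarrow> real"
      have h0: "0 \<le> indicator {0..} (p j) * exp (- real (Suc k) * p j)" for j by simp
      have "(\<Prod>j<d. ennreal (indicator {0..} (p j) * exp (- real (Suc k) * p j))) = ennreal (\<Prod>j<d. indicator {0..} (p j) * exp (- real (Suc k) * p j))"
        by (rule prod_ennreal) (rule h0)
      moreover have "ennreal (g k p) = ennreal (r ^ Suc k) * ennreal (\<Prod>j<d. indicator {0..} (p j) * exp (- real (Suc k) * p j))"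
        unfolding g_def by (rule ennreal_mult) (use r h0 in \<open>auto intro: prod_nonneg\<close>)
      ultimately show "ennreal (g k p) = ennreal (r ^ Suc k) * (\<Prod>j<d. ennreal (indicator {0..} (p j) * exp (- real (Suc k) * p j)))"
        by simp
    qed
    also have "\<dots> = ennreal (r ^ Suc k) * (\<integral>\<^sup>+ p. (\<Prod>j<d. ennreal (indicator {0..} (p j) * exp (- real (Suc k) * p j))) \<partial>M)"
      by (rule nn_integral_cmult) (simp add: M_def)
    also have "(\<integral>\<^sup>+ p. (\<Prod>j<d. ennreal (indicator {0..} (p j) * exp (- real (Suc k) * p j))) \<partial>M) = (\<Prod>j<d. ennreal (1 / real (Suc k)))"
    proof -
      have e1: "(\<integral>\<^sup>+ x. ennreal (indicator {0..} x * exp (- real (Suc k) * x)) \<partial>lborel) = ennreal (1 / real (Suc k))"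
        by (rule exp_1d_nn) simp
      have "(\<integral>\<^sup>+ p. (\<Prod>j<d. (\<lambda>x. ennreal (indicator {0..} x * exp (- real (Suc k) * x))) (p j)) \<partial>M)
            = (\<Prod>j<d. integral\<^sup>N lborel (\<lambda>x. ennreal (indicator {0..} x * exp (- real (Suc k) * x))))"
        unfolding M_def by (rule product_nn_integral_prod) auto
      thus ?thesis by (simp only: e1)
    qed
    also have "ennreal (r ^ Suc k) * (\<Prod>j<d. ennreal (1 / real (Suc k))) = ennreal (r ^ Suc k / real (Suc k) ^ d)"
    proof -
      have q1: "(\<Prod>j<d. ennreal (1 / real (Suc k))) = ennreal ((1 / real (Suc k)) ^ d)"
        by (simp add: ennreal_power)
      have q2: "ennreal (r ^ Suc k) * ennreal ((1 / real (Suc k)) ^ d) = ennreal (r ^ Suc k * (1 / real (Suc k)) ^ d)"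
        by (rule ennreal_mult[symmetric]) (use r in auto)
      have q3: "r ^ Suc k * (1 / real (Suc k)) ^ d = r ^ Suc k / real (Suc k) ^ d"
        by (simp add: power_one_over)
      show ?thesis by (simp only: q1 q2 q3)
    qed
    finally show "(\<integral>\<^sup>+ p. ennreal (g k p) \<partial>M) = ennreal (r ^ Suc k / real (Suc k) ^ d)" .
  qed
  also have "\<dots> = ennreal (Li d r)"
    unfolding Li_def
    by (rule suminf_ennreal_eq, use r in simp, rule summable_sums, rule Li_summable) (use r d in auto)
  finally have nn: "(\<integral>\<^sup>+ p. ennreal (indicator S p * f p) \<partial>M) = ennreal (Li d r)" .
  have hb: "has_bochner_integral M (\<lambda>p. indicator S p * f p) (Li d r)"
  proof (rule has_bochner_integral_nn_integral)
    show "(\<lambda>p. indicator S p * f p) \<in> borel_measurable M" using Smeas fmeas by measurable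
    show "AE x in M. 0 \<le> indicator S x * f x"
    proof (rule AE_I2)
      fix x assume x: "x \<in> space M"
      have "indicator S x * f x = (\<Sum>k. g k x)" using sums_g[OF x] by (simp add: sums_iff)
      also have "\<dots> \<ge> 0" by (rule suminf_nonneg) (use sums_g[OF x] gnn in \<open>auto simp: sums_iff\<close>)
      finally show "0 \<le> indicator S x * f x" .
    qed
    show "0 \<le> Li d r" by (rule Li_nonneg) (use r d in auto)
  qed fact
  have "limit_integral d r = integral\<^sup>L M (\<lambda>p. indicator S p * f p)"
    unfolding limit_integral_def set_lebesgue_integral_def M_def S_def f_def by simp
  also have "\<dots> = Li d r" using hb by (rule has_bochner_integral_integral_eq)
  finally show ?thesis .
qed


context
  fixes d :: nat and \<beta> lam \<mu> :: real
  assumes d: "d \<ge> 2" and b: "\<beta> > 0" and l: "lam > 0"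
begin

abbreviation "rkX \<equiv> r_kappa d \<beta> \<mu> lam"
abbreviation "ZcX \<equiv> zeta_nat d / \<beta> ^ d"
abbreviation "PhiX r \<equiv> ln r / (\<beta> * lam) + Li d r / \<beta> ^ d"

lemma Hf_eq: "Hf \<beta> \<mu> lam r = \<mu> / lam - ln r / (\<beta> * lam)"
  unfolding Hf_def using b l by (simp add: field_simps)

lemma L_ev: "eventually (\<lambda>\<kappa>. 0 < \<kappa> \<and> 0 < rkX \<kappa> \<and> rkX \<kappa> < 1 \<and> Fk d \<beta> \<kappa> (rkX \<kappa>) = Hf \<beta> \<mu> lam (rkX \<kappa>)) at_top"
  by (rule eventually_mono[OF eventually_gt_at_top[of 0]]) (use rk_char[OF d _ b l] in auto)

lemma kd_top: "filterlim (\<lambda>\<kappa>::real. \<kappa> ^ d) at_top at_top"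
  by (rule filterlim_pow_at_top[OF _ filterlim_ident]) (use d in auto)

lemma t_lim: "((\<lambda>\<kappa>::real. \<beta> / \<kappa>) \<longlongrightarrow> 0) at_top"
  by (rule tendsto_divide_0[OF tendsto_const filterlim_at_top_imp_at_infinity[OF filterlim_ident]])

lemma t_pos: "eventually (\<lambda>\<kappa>::real. \<beta> / \<kappa> > 0) at_top"
  by (rule eventually_mono[OF eventually_gt_at_top[of 0]]) (use b in auto)

lemma L_pt:
  assumes r: "0 < r" "r < 1"
  shows "((\<lambda>\<kappa>. Fk d \<beta> \<kappa> r) \<longlongrightarrow> Li d r / \<beta> ^ d) at_top"
proof -
  have P: "((\<lambda>\<kappa>. Pser d (\<beta> / \<kappa>) r) \<longlongrightarrow> Li d r) at_top"
    by (rule Pser_lim[OF d t_lim t_pos tendsto_const]) (use r in auto)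
  have "filterlim (\<lambda>\<kappa>::real. (1 - r) * \<kappa> ^ d) at_top at_top"
    by (rule filterlim_tendsto_pos_mult_at_top[OF tendsto_const _ kd_top]) (use r in auto)
  hence Q: "((\<lambda>\<kappa>. r / ((1 - r) * \<kappa> ^ d)) \<longlongrightarrow> 0) at_top"
    by (rule tendsto_divide_0[OF tendsto_const filterlim_at_top_imp_at_infinity])
  have "((\<lambda>\<kappa>. Pser d (\<beta> / \<kappa>) r / \<beta> ^ d + r / ((1 - r) * \<kappa> ^ d)) \<longlongrightarrow> Li d r / \<beta> ^ d + 0) at_top"
    by (intro tendsto_add tendsto_divide P Q tendsto_const) (use b in auto)
  thus ?thesis unfolding Fk_def by simp
qed

lemma L_cmp_lo:
  assumes r: "0 < r" "r < 1" and lt: "Li d r / \<beta> ^ d < Hf \<beta> \<mu> lam r"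
  shows "eventually (\<lambda>\<kappa>. r < rkX \<kappa>) at_top"
proof -
  have "eventually (\<lambda>\<kappa>. Fk d \<beta> \<kappa> r < Hf \<beta> \<mu> lam r) at_top"
    by (rule order_tendstoD(2)[OF L_pt[OF r] lt])
  thus ?thesis
  proof (rule eventually_elim2[OF L_ev])
    fix \<kappa> assume A: "0 < \<kappa> \<and> 0 < rkX \<kappa> \<and> rkX \<kappa> < 1 \<and> Fk d \<beta> \<kappa> (rkX \<kappa>) = Hf \<beta> \<mu> lam (rkX \<kappa>)"
      and B: "Fk d \<beta> \<kappa> r < Hf \<beta> \<mu> lam r"
    show "r < rkX \<kappa>"
    proof (rule ccontr)
      assume "\<not> r < rkX \<kappa>"
      hence le: "rkX \<kappa> \<le> r" by simp
      have "Fk d \<beta> \<kappa> (rkX \<kappa>) \<le> Fk d \<beta> \<kappa> r" by (rule Fk_mono[OF d _ b]) (use A le r in auto)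
      moreover have "Hf \<beta> \<mu> lam r \<le> Hf \<beta> \<mu> lam (rkX \<kappa>)"
        using Hf_strict[OF b l, of "rkX \<kappa>" r \<mu>] A le by (cases "rkX \<kappa> = r") auto
      ultimately show False using A B by linarith
    qed
  qed
qed

lemma L_cmp_hi:
  assumes r: "0 < r" "r < 1" and gt: "Li d r / \<beta> ^ d > Hf \<beta> \<mu> lam r"
  shows "eventually (\<lambda>\<kappa>. rkX \<kappa> < r) at_top"
proof -
  have "eventually (\<lambda>\<kappa>. Fk d \<beta> \<kappa> r > Hf \<beta> \<mu> lam r) at_top"
    by (rule order_tendstoD(1)[OF L_pt[OF r] gt])
  thus ?thesis
  proof (rule eventually_elim2[OF L_ev])
    fix \<kappa> assume A: "0 < \<kappa> \<and> 0 < rkX \<kappa> \<and> rkX \<kappa> < 1 \<and> Fk d \<beta> \<kappa> (rkX \<kappa>) = Hf \<beta> \<mu> lam (rkX \<kappa>)"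
      and B: "Fk d \<beta> \<kappa> r > Hf \<beta> \<mu> lam r"
    show "rkX \<kappa> < r"
    proof (rule ccontr)
      assume "\<not> rkX \<kappa> < r"
      hence le: "r \<le> rkX \<kappa>" by simp
      have "Fk d \<beta> \<kappa> r \<le> Fk d \<beta> \<kappa> (rkX \<kappa>)" by (rule Fk_mono[OF d _ b]) (use A le r in auto)
      moreover have "Hf \<beta> \<mu> lam (rkX \<kappa>) \<le> Hf \<beta> \<mu> lam r"
        using Hf_strict[OF b l, of r "rkX \<kappa>" \<mu>] A le r by (cases "rkX \<kappa> = r") auto
      ultimately show False using A B by linarith
    qed
  qed
qed

lemma Li_le_zeta: "0 \<le> r \<Longrightarrow> r \<le> 1 \<Longrightarrow> Li d r \<le> zeta_nat d"
  using Li_mono[OF d, of r 1] Li_one[of d] by simp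

lemma Phi_strict:
  assumes "0 < r1" "r1 < r2" "r2 \<le> 1"
  shows "PhiX r1 < PhiX r2"
proof -
  have "ln r1 < ln r2" using assms by simp
  hence "ln r1 / (\<beta> * lam) < ln r2 / (\<beta> * lam)" using b l by (simp add: divide_strict_right_mono)
  moreover have "Li d r1 / \<beta> ^ d \<le> Li d r2 / \<beta> ^ d"
    using Li_mono[OF d, of r1 r2] assms b by (simp add: divide_right_mono)
  ultimately show ?thesis by simp
qed

lemma Li_cont: "continuous_on {0..1} (Li d)"
  unfolding continuous_on_def
proof safe
  fix x :: real assume "x \<in> {0..1}"
  show "(Li d \<longlongrightarrow> Li d x) (at x within {0..1})"
  proof -
    have "eventually (\<lambda>r. 0 \<le> r \<and> r \<le> 1) (at x within {0..1})"
      by (rule eventually_mono[OF eventually_within_self]) auto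
    from Li_lim[OF d tendsto_ident_at this] show ?thesis by simp
  qed
qed

lemma case_lt:
  assumes M: "\<mu> / lam < ZcX"
  shows "\<exists>rs. 0 < rs \<and> rs < 1 \<and> PhiX rs = \<mu> / lam \<and> (rkX \<longlongrightarrow> rs) at_top"
proof -
  define a where "a = min (1/2) (exp ((\<mu> / lam - ZcX) * (\<beta> * lam)))"
  have a: "0 < a" "a < 1" unfolding a_def by auto
  have "ln a \<le> ln (exp ((\<mu> / lam - ZcX) * (\<beta> * lam)))"
    using a unfolding a_def by (subst ln_le_cancel_iff) auto
  hence "ln a \<le> (\<mu> / lam - ZcX) * (\<beta> * lam)" by simp
  hence 1: "ln a / (\<beta> * lam) \<le> \<mu> / lam - ZcX" using b l by (simp add: divide_le_eq)
  have "Li d a / \<beta> ^ d \<le> ZcX" using Li_le_zeta[of a] a b by (simp add: divide_right_mono)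
  with 1 have Pa: "PhiX a \<le> \<mu> / lam" by simp
  have lim1: "((\<lambda>r. PhiX r) \<longlongrightarrow> ln 1 / (\<beta> * lam) + Li d 1 / \<beta> ^ d) (at_left 1)"
  proof (intro tendsto_intros)
    show "((\<lambda>r. Li d r) \<longlongrightarrow> Li d 1) (at_left 1)"
      by (rule Li_lim[OF d tendsto_ident_at])
         (rule eventually_mono[OF eventually_conj[OF eventually_within_self order_tendstoD(1)[OF tendsto_ident_at, of 0]]], auto)
  qed (use b l in auto)
  hence lim1': "((\<lambda>r. PhiX r) \<longlongrightarrow> ZcX) (at_left 1)" by (simp add: Li_one)
  have "eventually (\<lambda>r. \<mu> / lam < PhiX r \<and> a < r \<and> r < 1) (at_left 1)"
    by (intro eventually_conj order_tendstoD(1)[OF lim1' M] order_tendstoD(1)[OF tendsto_ident_at a(2)])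
       (rule eventually_mono[OF eventually_within_self], auto)
  then obtain b' where b': "\<mu> / lam < PhiX b'" "a < b'" "b' < 1"
    using eventually_happens'[OF trivial_limit_at_left_real[of 1]] by blast
  have cont: "continuous_on {a..b'} (\<lambda>r. PhiX r)"
  proof -
    have c1: "continuous_on {a..b'} (Li d)" by (rule continuous_on_subset[OF Li_cont]) (use a b' in auto)
    have c2: "continuous_on {a..b'} (\<lambda>r. ln r / (\<beta> * lam))"
      by (intro continuous_intros) (use a b l in auto)
    have c3: "continuous_on {a..b'} (\<lambda>r. Li d r / \<beta> ^ d)"
      by (rule continuous_on_divide[OF c1 continuous_on_const]) (use b in auto)
    show ?thesis by (rule continuous_on_add[OF c2 c3])
  qed
  obtain rs where rs: "a \<le> rs" "rs \<le> b'" "PhiX rs = \<mu> / lam"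
    using IVT'[of "\<lambda>r. PhiX r" a "\<mu> / lam" b', OF Pa _ _ cont] b' by auto
  have rs01: "0 < rs" "rs < 1" using rs a b' by auto
  have "(rkX \<longlongrightarrow> rs) at_top"
  proof (rule order_tendstoI)
    fix y assume y: "y < rs"
    show "eventually (\<lambda>\<kappa>. y < rkX \<kappa>) at_top"
    proof (cases "y \<le> 0")
      case True thus ?thesis by (rule_tac eventually_mono[OF L_ev]) auto
    next
      case False
      have "PhiX y < PhiX rs" by (rule Phi_strict) (use False y rs01 in auto)
      hence "Li d y / \<beta> ^ d < Hf \<beta> \<mu> lam y" unfolding Hf_eq using rs by simp
      thus ?thesis by (rule L_cmp_lo[rotated 2]) (use False y rs01 in auto)
    qed
  next
    fix y assume y: "rs < y"
    show "eventually (\<lambda>\<kappa>. rkX \<kappa> < y) at_top"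
    proof (cases "y \<ge> 1")
      case True thus ?thesis by (rule_tac eventually_mono[OF L_ev]) auto
    next
      case False
      have "PhiX rs < PhiX y" by (rule Phi_strict) (use False y rs01 in auto)
      hence "Li d y / \<beta> ^ d > Hf \<beta> \<mu> lam y" unfolding Hf_eq using rs by simp
      thus ?thesis by (rule L_cmp_hi[rotated 2]) (use False y rs01 in auto)
    qed
  qed
  thus ?thesis using rs rs01 by blast
qed

lemma case_ge:
  assumes M: "\<mu> / lam \<ge> ZcX"
  shows "(rkX \<longlongrightarrow> 1) at_top" "((\<lambda>\<kappa>. rkX \<kappa> / ((1 - rkX \<kappa>) * \<kappa> ^ d)) \<longlongrightarrow> \<mu> / lam - ZcX) at_top"
proof -
  show R: "(rkX \<longlongrightarrow> 1) at_top"
  proof (rule order_tendstoI)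
    fix y :: real assume y: "y < 1"
    show "eventually (\<lambda>\<kappa>. y < rkX \<kappa>) at_top"
    proof (cases "y \<le> 0")
      case True thus ?thesis by (rule_tac eventually_mono[OF L_ev]) auto
    next
      case False
      have "Li d y / \<beta> ^ d \<le> ZcX" using Li_le_zeta[of y] False y b by (simp add: divide_right_mono)
      moreover have "ln y < 0" using False y by simp
      hence "ln y / (\<beta> * lam) < 0" using b l by (simp add: divide_neg_pos)
      ultimately have "Li d y / \<beta> ^ d < Hf \<beta> \<mu> lam y" unfolding Hf_eq using M by linarith
      thus ?thesis by (rule L_cmp_lo[rotated 2]) (use False y in auto)
    qed
  next
    fix y :: real assume "1 < y"
    thus "eventually (\<lambda>\<kappa>. rkX \<kappa> < y) at_top" by (rule_tac eventually_mono[OF L_ev]) auto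
  qed
  have H: "((\<lambda>\<kappa>. Hf \<beta> \<mu> lam (rkX \<kappa>)) \<longlongrightarrow> (\<beta> * \<mu> - ln 1) / (\<beta> * lam)) at_top"
    unfolding Hf_def by (intro tendsto_intros R) (use b l in auto)
  have P: "((\<lambda>\<kappa>. Pser d (\<beta> / \<kappa>) (rkX \<kappa>)) \<longlongrightarrow> Li d 1) at_top"
    by (rule Pser_lim[OF d t_lim t_pos R]) (rule eventually_mono[OF L_ev], auto)
  have T0: "((\<lambda>\<kappa>. Hf \<beta> \<mu> lam (rkX \<kappa>) - Pser d (\<beta> / \<kappa>) (rkX \<kappa>) / \<beta> ^ d) \<longlongrightarrow>
        (\<beta> * \<mu> - ln 1) / (\<beta> * lam) - Li d 1 / \<beta> ^ d) at_top"
    by (intro tendsto_intros H P) (use b l in auto)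
  have V: "(\<beta> * \<mu> - ln 1) / (\<beta> * lam) - Li d 1 / \<beta> ^ d = \<mu> / lam - ZcX"
    using b l by (simp add: Li_one)
  have T: "((\<lambda>\<kappa>. Hf \<beta> \<mu> lam (rkX \<kappa>) - Pser d (\<beta> / \<kappa>) (rkX \<kappa>) / \<beta> ^ d) \<longlongrightarrow> \<mu> / lam - ZcX) at_top"
    using T0 unfolding V .
  have E: "eventually (\<lambda>\<kappa>. Hf \<beta> \<mu> lam (rkX \<kappa>) - Pser d (\<beta> / \<kappa>) (rkX \<kappa>) / \<beta> ^ d = rkX \<kappa> / ((1 - rkX \<kappa>) * \<kappa> ^ d)) at_top"
  proof (rule eventually_mono[OF L_ev])
    fix \<kappa> assume A: "0 < \<kappa> \<and> 0 < rkX \<kappa> \<and> rkX \<kappa> < 1 \<and> Fk d \<beta> \<kappa> (rkX \<kappa>) = Hf \<beta> \<mu> lam (rkX \<kappa>)"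
    hence "Pser d (\<beta> / \<kappa>) (rkX \<kappa>) / \<beta> ^ d + rkX \<kappa> / ((1 - rkX \<kappa>) * \<kappa> ^ d) = Hf \<beta> \<mu> lam (rkX \<kappa>)"
      unfolding Fk_def by (elim conjE)
    thus "Hf \<beta> \<mu> lam (rkX \<kappa>) - Pser d (\<beta> / \<kappa>) (rkX \<kappa>) / \<beta> ^ d = rkX \<kappa> / ((1 - rkX \<kappa>) * \<kappa> ^ d)"
      by linarith
  qed
  show "((\<lambda>\<kappa>. rkX \<kappa> / ((1 - rkX \<kappa>) * \<kappa> ^ d)) \<longlongrightarrow> \<mu> / lam - ZcX) at_top"
    by (rule Lim_transform_eventually[OF T E])
qed

end


lemma aux_inv: "0 < r \<Longrightarrow> r < 1 \<Longrightarrow> (\<kappa>::real) > 0 \<Longrightarrow> r * inverse (r / ((1 - r) * \<kappa> ^ d)) = \<kappa> ^ d * (1 - r)"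
  by (simp add: inverse_divide)

lemma aux_div: "0 < r \<Longrightarrow> r < 1 \<Longrightarrow> (\<kappa>::real) > 0 \<Longrightarrow> r / (r / ((1 - r) * \<kappa> ^ d)) = \<kappa> ^ d * (1 - r)"
  by simp

lemma kd_lim_lt:
  fixes d :: nat and \<beta> lam \<mu> :: real
  assumes d: "d \<ge> 2" and b: "\<beta> > 0" and l: "lam > 0"
  assumes rs: "rs < 1" and R: "(r_kappa d \<beta> \<mu> lam \<longlongrightarrow> rs) at_top"
  shows "filterlim (\<lambda>\<kappa>. \<kappa> ^ d * (1 - r_kappa d \<beta> \<mu> lam \<kappa>)) at_top at_top"
proof -
  have "((\<lambda>\<kappa>. 1 - r_kappa d \<beta> \<mu> lam \<kappa>) \<longlongrightarrow> 1 - rs) at_top" by (intro tendsto_intros R)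
  from filterlim_tendsto_pos_mult_at_top[OF this _ kd_top[OF d b l]]
  show ?thesis using rs by (simp add: mult.commute)
qed

lemma kd_lim_gt:
  fixes d :: nat and \<beta> lam \<mu> :: real
  assumes d: "d \<ge> 2" and b: "\<beta> > 0" and l: "lam > 0" and M: "\<mu> / lam > zeta_nat d / \<beta> ^ d"
  shows "((\<lambda>\<kappa>. \<kappa> ^ d * (1 - r_kappa d \<beta> \<mu> lam \<kappa>)) \<longlongrightarrow> 1 / (\<mu> / lam - zeta_nat d / \<beta> ^ d)) at_top"
proof -
  let ?r = "r_kappa d \<beta> \<mu> lam"
  have R: "(?r \<longlongrightarrow> 1) at_top" using case_ge(1)[OF d b l, of \<mu>] M by simp
  have Q: "((\<lambda>\<kappa>. ?r \<kappa> / ((1 - ?r \<kappa>) * \<kappa> ^ d)) \<longlongrightarrow> \<mu> / lam - zeta_nat d / \<beta> ^ d) at_top"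
    using case_ge(2)[OF d b l, of \<mu>] M by simp
  have "((\<lambda>\<kappa>. ?r \<kappa> / (?r \<kappa> / ((1 - ?r \<kappa>) * \<kappa> ^ d))) \<longlongrightarrow> 1 / (\<mu> / lam - zeta_nat d / \<beta> ^ d)) at_top"
    by (rule tendsto_divide[OF R Q]) (use M in auto)
  moreover have "eventually (\<lambda>\<kappa>. ?r \<kappa> / (?r \<kappa> / ((1 - ?r \<kappa>) * \<kappa> ^ d)) = \<kappa> ^ d * (1 - ?r \<kappa>)) at_top"
    by (rule eventually_mono[OF L_ev[OF d b l, of \<mu>]]) (elim conjE, rule aux_div, assumption+)
  ultimately show ?thesis by (rule Lim_transform_eventually)
qed

lemma kd_lim_eq:
  fixes d :: nat and \<beta> lam \<mu> :: real
  assumes d: "d \<ge> 2" and b: "\<beta> > 0" and l: "lam > 0" and M: "\<mu> / lam = zeta_nat d / \<beta> ^ d"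
  shows "filterlim (\<lambda>\<kappa>. \<kappa> ^ d * (1 - r_kappa d \<beta> \<mu> lam \<kappa>)) at_top at_top"
proof -
  let ?r = "r_kappa d \<beta> \<mu> lam"
  have R: "(?r \<longlongrightarrow> 1) at_top" using case_ge(1)[OF d b l, of \<mu>] M by simp
  have Q0: "((\<lambda>\<kappa>. ?r \<kappa> / ((1 - ?r \<kappa>) * \<kappa> ^ d)) \<longlongrightarrow> \<mu> / lam - zeta_nat d / \<beta> ^ d) at_top"
    using case_ge(2)[OF d b l, of \<mu>] M by simp
  have Q: "((\<lambda>\<kappa>. ?r \<kappa> / ((1 - ?r \<kappa>) * \<kappa> ^ d)) \<longlongrightarrow> 0) at_top" using Q0 unfolding M by simp
  have "filterlim (\<lambda>\<kappa>. inverse (?r \<kappa> / ((1 - ?r \<kappa>) * \<kappa> ^ d))) at_top at_top"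
    by (rule filterlim_inverse_at_top[OF Q]) (rule eventually_mono[OF L_ev[OF d b l, of \<mu>]], auto)
  from filterlim_tendsto_pos_mult_at_top[OF R _ this]
  have F: "filterlim (\<lambda>\<kappa>. ?r \<kappa> * inverse (?r \<kappa> / ((1 - ?r \<kappa>) * \<kappa> ^ d))) at_top at_top" by simp
  have E: "eventually (\<lambda>\<kappa>. ?r \<kappa> * inverse (?r \<kappa> / ((1 - ?r \<kappa>) * \<kappa> ^ d)) = \<kappa> ^ d * (1 - ?r \<kappa>)) at_top"
    by (rule eventually_mono[OF L_ev[OF d b l, of \<mu>]]) (elim conjE, rule aux_inv, assumption+)
  show ?thesis by (rule filterlim_cong[OF refl refl E, THEN iffD1, OF F])
qed

theorem proposition2p1:
  fixes d :: nat and \<beta> lam \<mu> :: real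
  assumes "d > 2" and "\<beta> > 0" and "lam > 0"
  defines "rk \<equiv> r_kappa d \<beta> \<mu> lam"
  shows
    "(((\<exists>rs. 0 < rs \<and> rs < 1 \<and> (rk \<longlongrightarrow> rs) at_top)
        \<longleftrightarrow> \<beta> ^ d * \<mu> < zeta_nat d * lam)
     \<and> (\<forall>rs. 0 < rs \<and> rs < 1 \<and> (rk \<longlongrightarrow> rs) at_top \<longrightarrow>
          \<mu> / lam = ln rs / (\<beta> * lam) + limit_integral d rs / \<beta> ^ d
          \<and> (\<forall>r. 0 < r \<and> r < 1 \<and>
                  \<mu> / lam = ln r / (\<beta> * lam) + limit_integral d r / \<beta> ^ d \<longrightarrow> r = rs)))
     \<and> ((((\<lambda>\<kappa>. \<kappa> ^ d * (1 - rk \<kappa>)) \<longlongrightarrow> \<beta> ^ d * lam / (\<beta> ^ d * \<mu> - zeta_nat d * lam)) at_top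
        \<longleftrightarrow> \<beta> ^ d * \<mu> > zeta_nat d * lam)
     \<and> (\<beta> ^ d * \<mu> > zeta_nat d * lam \<longrightarrow> (rk \<longlongrightarrow> 1) at_top))
     \<and> (((rk \<longlongrightarrow> 1) at_top \<and> filterlim (\<lambda>\<kappa>. \<kappa> ^ d * (1 - rk \<kappa>)) at_top at_top)
        \<longleftrightarrow> \<beta> ^ d * \<mu> = zeta_nat d * lam)"
proof -
  have d: "d \<ge> 2" using assms(1) by simp
  have b: "\<beta> > 0" and l: "lam > 0" by fact+
  have bd: "\<beta> ^ d > 0" using b by simp
  let ?M = "\<mu> / lam" and ?Z = "zeta_nat d / \<beta> ^ d"
  have iff_lt: "\<beta> ^ d * \<mu> < zeta_nat d * lam \<longleftrightarrow> ?M < ?Z"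
    using bd l by (simp add: field_simps)
  have iff_gt: "\<beta> ^ d * \<mu> > zeta_nat d * lam \<longleftrightarrow> ?M > ?Z"
    using bd l by (simp add: field_simps)
  have bd0: "\<beta> ^ d \<noteq> 0" using b by simp
  have iff_eq: "\<beta> ^ d * \<mu> = zeta_nat d * lam \<longleftrightarrow> ?M = ?Z"
    using bd0 l by (auto simp: field_simps)
  have cv1: "?M - ?Z = (\<beta> ^ d * \<mu> - zeta_nat d * lam) / (\<beta> ^ d * lam)"
    using bd0 l by (simp add: diff_frac_eq mult.commute)
  have cval: "1 / (?M - ?Z) = \<beta> ^ d * lam / (\<beta> ^ d * \<mu> - zeta_nat d * lam)"
    unfolding cv1 by simp
  have nb: "(at_top :: real filter) \<noteq> bot" by simp
  have LI: "limit_integral d r = Li d r" if "0 < r" "r < 1" for r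
    using limit_integral_Li[OF that d] .
  note ge = case_ge[OF d b l, of \<mu>, folded rk_def]
  note lt = case_lt[OF d b l, of \<mu>, folded rk_def]
  have top_lt: "filterlim (\<lambda>\<kappa>. \<kappa> ^ d * (1 - rk \<kappa>)) at_top at_top" if lt0: "?M < ?Z"
  proof -
    obtain rs where "rs < 1" "(rk \<longlongrightarrow> rs) at_top" using lt[OF lt0] by blast
    thus ?thesis unfolding rk_def by (rule kd_lim_lt[OF d b l])
  qed
  have lim_gt: "((\<lambda>\<kappa>. \<kappa> ^ d * (1 - rk \<kappa>)) \<longlongrightarrow> \<beta> ^ d * lam / (\<beta> ^ d * \<mu> - zeta_nat d * lam)) at_top" if "?M > ?Z"
    using kd_lim_gt[OF d b l that] unfolding rk_def cval .
  have top_eq: "filterlim (\<lambda>\<kappa>. \<kappa> ^ d * (1 - rk \<kappa>)) at_top at_top" if "?M = ?Z"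
    using kd_lim_eq[OF d b l that] unfolding rk_def .
  have ge1: "(rk \<longlongrightarrow> 1) at_top" if "?M \<ge> ?Z" using ge(1)[OF that] .
  have no_sub1: False if "(rk \<longlongrightarrow> rs) at_top" "rs < 1" "?M \<ge> ?Z" for rs
  proof -
    have "rs = 1" by (rule tendsto_unique[OF nb that(1) ge1[OF that(3)]])
    thus False using that(2) by simp
  qed
  have conflict: False if "((\<lambda>\<kappa>. \<kappa> ^ d * (1 - rk \<kappa>)) \<longlongrightarrow> c) at_top"
     "filterlim (\<lambda>\<kappa>. \<kappa> ^ d * (1 - rk \<kappa>)) at_top at_top" for c
    by (rule not_tendsto_and_filterlim_at_infinity[OF nb that(1) filterlim_at_top_imp_at_infinity[OF that(2)]])
  consider (LT) "?M < ?Z" | (EQ) "?M = ?Z" | (GT) "?M > ?Z" by linarith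
  thus ?thesis
  proof cases
    case LT
    obtain rs0 where rs0: "0 < rs0" "rs0 < 1" "ln rs0 / (\<beta> * lam) + Li d rs0 / \<beta> ^ d = ?M" "(rk \<longlongrightarrow> rs0) at_top"
      using lt[OF LT] by blast
    have A1: "\<exists>rs. 0 < rs \<and> rs < 1 \<and> (rk \<longlongrightarrow> rs) at_top" using rs0 by blast
    have A2: "\<mu> / lam = ln rs / (\<beta> * lam) + limit_integral d rs / \<beta> ^ d
          \<and> (\<forall>r. 0 < r \<and> r < 1 \<and>
                  \<mu> / lam = ln r / (\<beta> * lam) + limit_integral d r / \<beta> ^ d \<longrightarrow> r = rs)"
      if rs: "0 < rs" "rs < 1" "(rk \<longlongrightarrow> rs) at_top" for rs
    proof -
      have e: "rs = rs0" by (rule tendsto_unique[OF nb rs(3) rs0(4)])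
      have E1: "\<mu> / lam = ln rs / (\<beta> * lam) + limit_integral d rs / \<beta> ^ d"
        using rs0(3) LI[OF rs(1,2)] e by simp
      have E2: "r = rs" if r: "0 < r" "r < 1" "\<mu> / lam = ln r / (\<beta> * lam) + limit_integral d r / \<beta> ^ d" for r
      proof -
        have pr: "ln r / (\<beta> * lam) + Li d r / \<beta> ^ d = ?M" using r LI[OF r(1,2)] by simp
        show "r = rs"
        proof (rule ccontr)
          assume "r \<noteq> rs"
          hence "r < rs0 \<or> rs0 < r" using e by auto
          thus False
          proof
            assume "r < rs0"
            from Phi_strict[OF d b l r(1) this] rs0 pr show False by simp
          next
            assume "rs0 < r"
            from Phi_strict[OF d b l rs0(1) this] r rs0 pr show False by simp
          qed
        qed
      qed
      show ?thesis using E1 E2 by blast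
    qed
    have B1: "\<not> ((\<lambda>\<kappa>. \<kappa> ^ d * (1 - rk \<kappa>)) \<longlongrightarrow> \<beta> ^ d * lam / (\<beta> ^ d * \<mu> - zeta_nat d * lam)) at_top"
      using conflict top_lt[OF LT] by blast
    have C1: "\<not> (rk \<longlongrightarrow> 1) at_top"
    proof
      assume "(rk \<longlongrightarrow> 1) at_top"
      from tendsto_unique[OF nb this rs0(4)] rs0(2) show False by simp
    qed
    show ?thesis using A1 A2 B1 C1 LT iff_lt iff_gt iff_eq by auto
  next
    case EQ
    have A1: "\<not> (\<exists>rs. 0 < rs \<and> rs < 1 \<and> (rk \<longlongrightarrow> rs) at_top)" using no_sub1 EQ by auto
    have B1: "\<not> ((\<lambda>\<kappa>. \<kappa> ^ d * (1 - rk \<kappa>)) \<longlongrightarrow> \<beta> ^ d * lam / (\<beta> ^ d * \<mu> - zeta_nat d * lam)) at_top"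
      using conflict top_eq[OF EQ] by blast
    show ?thesis using A1 B1 EQ ge1[of] top_eq[OF EQ] iff_lt iff_gt iff_eq by auto
  next
    case GT
    have A1: "\<not> (\<exists>rs. 0 < rs \<and> rs < 1 \<and> (rk \<longlongrightarrow> rs) at_top)" using no_sub1 GT by auto
    have C1: "\<not> filterlim (\<lambda>\<kappa>. \<kappa> ^ d * (1 - rk \<kappa>)) at_top at_top"
      using conflict lim_gt[OF GT] by blast
    show ?thesis using A1 C1 GT ge1 lim_gt[OF GT] iff_lt iff_gt iff_eq by auto
  qed
qed


end
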